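(* Let $A$ be a real symmetric $n\times n$ matrix with symmetric tropical rank $r$, and let $\mathbf a_n$ denote its $n$th column. Define the $(n+1)\times(n+1)$ matrix $$A''=\begin{pmatrix}A&\mathbf a_n\\ \mathbf a_n^{T}&a_{n,n}\end{pmatrix},$$ obtained by duplicating the last column and then the last row. Then $A''$ is symmetric and has symmetric tropical rank $r$.
   Context: For an $r\times r$ submatrix of a real symmetric matrix $A$ with row index set $I$ and column index set $J$, each bijection $\rho:I\to J$ gives a monomial $\prod_{i\in I}X_{i,\rho(i)}$ in commuting variables subject to $X_{i,j}=X_{j,i}$, with value $\sum_{i\in I}A_{i,\rho(i)}$; the submatrix is symmetrically tropically singular if the minimum value is attained by at least two distinct monomials. The symmetric tropical rank of $A$ is the largest $r$ such that $A$ has an $r\times r$ submatrix (arbitrary row and column sets) that is not symmetrically tropically singular. *)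

theory Defs
  imports Complex_Main "HOL-Library.Multiset"
begin

text \<open>Matrices are functions nat => nat => real; an n x n matrix uses indices 0..<n.\<close>

definition symmetric_mat :: "nat \<Rightarrow> (nat \<Rightarrow> nat \<Rightarrow> real) \<Rightarrow> bool" where
  "symmetric_mat n A \<longleftrightarrow> (\<forall>i<n. \<forall>j<n. A i j = A j i)"

text \<open>Monomial prod_{i in I} X_{i, rho i} with X_{i,j} = X_{j,i}: a multiset of unordered
  index pairs, each pair represented as the set {i, rho i}.\<close>
definition sym_monomial :: "nat set \<Rightarrow> (nat \<Rightarrow> nat) \<Rightarrow> nat set multiset" where
  "sym_monomial I \<rho> = image_mset (\<lambda>i. {i, \<rho> i}) (mset_set I)"

definition trop_value :: "(nat \<Rightarrow> nat \<Rightarrow> real) \<Rightarrow> nat set \<Rightarrow> (nat \<Rightarrow> nat) \<Rightarrow> real" where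
  "trop_value A I \<rho> = (\<Sum>i\<in>I. A i (\<rho> i))"

definition trop_minimizer :: "(nat \<Rightarrow> nat \<Rightarrow> real) \<Rightarrow> nat set \<Rightarrow> nat set \<Rightarrow> (nat \<Rightarrow> nat) \<Rightarrow> bool" where
  "trop_minimizer A I J \<rho> \<longleftrightarrow> bij_betw \<rho> I J \<and>
     (\<forall>\<sigma>. bij_betw \<sigma> I J \<longrightarrow> trop_value A I \<rho> \<le> trop_value A I \<sigma>)"

definition sym_trop_singular :: "(nat \<Rightarrow> nat \<Rightarrow> real) \<Rightarrow> nat set \<Rightarrow> nat set \<Rightarrow> bool" where
  "sym_trop_singular A I J \<longleftrightarrow>
     (\<exists>\<rho>1 \<rho>2. trop_minimizer A I J \<rho>1 \<and> trop_minimizer A I J \<rho>2 \<and>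
        sym_monomial I \<rho>1 \<noteq> sym_monomial I \<rho>2)"

definition sym_trop_rank :: "nat \<Rightarrow> (nat \<Rightarrow> nat \<Rightarrow> real) \<Rightarrow> nat" where
  "sym_trop_rank n A = Max {r. \<exists>I J. I \<subseteq> {..<n} \<and> J \<subseteq> {..<n} \<and> card I = r \<and> card J = r \<and>
       \<not> sym_trop_singular A I J}"

definition dup_last :: "nat \<Rightarrow> (nat \<Rightarrow> nat \<Rightarrow> real) \<Rightarrow> (nat \<Rightarrow> nat \<Rightarrow> real)" where
  "dup_last n A = (\<lambda>i j. A (if i = n then n - 1 else i) (if j = n then n - 1 else j))"

end

theory Submission imports Defs "HOL-Library.FuncSet" begin

lemma exists_min:
  assumes "finite I" "finite J" "card I = card J"
  shows "\<exists>\<rho>. trop_minimizer B I J \<rho>"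
proof -
  let ?S = "{\<sigma>. bij_betw \<sigma> I J}"
  let ?V = "(\<lambda>\<sigma>. trop_value B I \<sigma>) ` ?S"
  have "?V \<subseteq> (\<lambda>\<sigma>. trop_value B I \<sigma>) ` (PiE I (\<lambda>_. J))"
  proof
    fix v assume "v \<in> ?V"
    then obtain \<sigma> where s: "bij_betw \<sigma> I J" "v = trop_value B I \<sigma>" by auto
    have "restrict \<sigma> I \<in> PiE I (\<lambda>_. J)" using s(1) bij_betwE by fastforce
    moreover have "trop_value B I (restrict \<sigma> I) = v" using s(2) unfolding trop_value_def by simp
    ultimately show "v \<in> (\<lambda>\<sigma>. trop_value B I \<sigma>) ` (PiE I (\<lambda>_. J))" by force
  qed
  moreover have "finite (PiE I (\<lambda>_. J))" using assms by (simp add: finite_PiE)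
  ultimately have fin: "finite ?V" by (meson finite_surj)
  obtain h where "bij_betw h I J" using finite_same_card_bij assms by blast
  then have ne: "?V \<noteq> {}" by auto
  obtain \<rho> where r: "\<rho> \<in> ?S" "trop_value B I \<rho> = Min ?V" using Min_in[OF fin ne] by auto
  have "trop_minimizer B I J \<rho>" unfolding trop_minimizer_def
    using r fin by (auto intro: Min_le)
  then show ?thesis by blast
qed

definition sw :: "nat \<Rightarrow> nat \<Rightarrow> nat \<Rightarrow> nat" where
  "sw p q i = (if i = p then q else if i = q then p else i)"

lemma sw_bij: "p \<in> I \<Longrightarrow> q \<in> I \<Longrightarrow> bij_betw (sw p q) I I"
  by (rule bij_betw_byWitness[where f'="sw p q"]) (auto simp: sw_def)

lemma mono_split:
  assumes "finite I" "p \<in> I" "q \<in> I" "p \<noteq> q"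
  shows "sym_monomial I \<rho> = {#{p, \<rho> p}, {q, \<rho> q}#} + image_mset (\<lambda>i. {i, \<rho> i}) (mset_set (I - {p, q}))"
proof -
  have "mset_set I = add_mset p (add_mset q (mset_set (I - {p, q})))"
  proof -
    have "mset_set I = add_mset p (mset_set (I - {p}))" using assms by (simp add: mset_set.remove)
    also have "mset_set (I - {p}) = add_mset q (mset_set (I - {p} - {q}))"
      using assms by (intro mset_set.remove) auto
    also have "I - {p} - {q} = I - {p, q}" by auto
    finally show ?thesis .
  qed
  then show ?thesis unfolding sym_monomial_def by simp
qed

lemma row_sing:
  assumes "finite I" "finite J" "card I = card J" "p \<in> I" "q \<in> I" "p \<noteq> q"
    and rows: "\<And>j. B p j = B q j"
  shows "sym_trop_singular B I J"
proof -
  obtain \<rho> where m: "trop_minimizer B I J \<rho>" using exists_min assms by blast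
  let ?r = "\<rho> \<circ> sw p q"
  have bs: "bij_betw (sw p q) I I" using sw_bij assms by auto
  have b: "bij_betw ?r I J" using m bs unfolding trop_minimizer_def using bij_betw_trans by blast
  have "trop_value B I ?r = (\<Sum>i\<in>I. B (sw p q i) (\<rho> (sw p q i)))"
    unfolding trop_value_def by (rule sum.cong) (auto simp: sw_def rows)
  also have "\<dots> = trop_value B I \<rho>" unfolding trop_value_def
    using sum.reindex_bij_betw[OF bs, of "\<lambda>i. B i (\<rho> i)"] by simp
  finally have "trop_minimizer B I J ?r" using m b unfolding trop_minimizer_def by simp
  moreover have "sym_monomial I \<rho> \<noteq> sym_monomial I ?r"
  proof
    assume eq: "sym_monomial I \<rho> = sym_monomial I ?r"
    have R: "image_mset (\<lambda>i. {i, ?r i}) (mset_set (I - {p, q})) = image_mset (\<lambda>i. {i, \<rho> i}) (mset_set (I - {p, q}))"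
      by (rule image_mset_cong) (use assms(1) in \<open>auto simp: sw_def\<close>)
    have "\<rho> p \<noteq> \<rho> q" using m assms unfolding trop_minimizer_def bij_betw_def inj_on_def by blast
    moreover have "{#{p, \<rho> p}, {q, \<rho> q}#} = {#{p, \<rho> q}, {q, \<rho> p}#}"
      using eq assms(6) unfolding mono_split[OF assms(1,4,5,6)] R by (simp add: sw_def add_mset_commute)
    ultimately have ne: "\<rho> p \<noteq> \<rho> q" and mm: "{p, \<rho> p} \<in># {#{p, \<rho> q}, {q, \<rho> p}#}"
      by (simp, metis add_mset_commute union_single_eq_member)
    from mm have "{p, \<rho> p} = {p, \<rho> q} \<or> {p, \<rho> p} = {q, \<rho> p}" by simp
    then show False using ne assms(6) by (auto simp: doubleton_eq_iff)
  qed
  ultimately show ?thesis unfolding sym_trop_singular_def using m by blast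
qed

lemma col_sing:
  assumes "finite I" "finite J" "card I = card J" "p \<in> J" "q \<in> J" "p \<noteq> q"
    and cols: "\<And>i. B i p = B i q"
  shows "sym_trop_singular B I J"
proof -
  obtain \<rho> where m: "trop_minimizer B I J \<rho>" using exists_min assms by blast
  have b0: "bij_betw \<rho> I J" using m unfolding trop_minimizer_def by simp
  let ?r = "sw p q \<circ> \<rho>"
  have bs: "bij_betw (sw p q) J J" using sw_bij assms by auto
  have b: "bij_betw ?r I J" using b0 bs bij_betw_trans by blast
  have "trop_value B I ?r = trop_value B I \<rho>"
    unfolding trop_value_def by (rule sum.cong) (auto simp: sw_def cols)
  then have "trop_minimizer B I J ?r" using m b unfolding trop_minimizer_def by simp
  moreover have "sym_monomial I \<rho> \<noteq> sym_monomial I ?r"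
  proof
    assume eq: "sym_monomial I \<rho> = sym_monomial I ?r"
    define i1 where "i1 = inv_into I \<rho> p"
    define i2 where "i2 = inv_into I \<rho> q"
    have i1: "i1 \<in> I" "\<rho> i1 = p" using b0 assms(4) unfolding i1_def
      by (auto simp: bij_betw_def inv_into_into f_inv_into_f)
    have i2: "i2 \<in> I" "\<rho> i2 = q" using b0 assms(5) unfolding i2_def
      by (auto simp: bij_betw_def inv_into_into f_inv_into_f)
    have ne: "i1 \<noteq> i2" using i1 i2 assms(6) by auto
    have R: "image_mset (\<lambda>i. {i, ?r i}) (mset_set (I - {i1, i2})) = image_mset (\<lambda>i. {i, \<rho> i}) (mset_set (I - {i1, i2}))"
    proof (rule image_mset_cong)
      fix x assume "x \<in># mset_set (I - {i1, i2})"
      then have x: "x \<in> I" "x \<noteq> i1" "x \<noteq> i2" using assms(1) by auto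
      then have "\<rho> x \<noteq> p" "\<rho> x \<noteq> q" using i1 i2 b0 unfolding bij_betw_def inj_on_def by metis+
      then show "{x, ?r x} = {x, \<rho> x}" by (simp add: sw_def)
    qed
    have "{#{i1, p}, {i2, q}#} = {#{i1, q}, {i2, p}#}"
      using eq ne i1 i2 assms(6) unfolding mono_split[OF assms(1) i1(1) i2(1) ne] R by (simp add: sw_def add_mset_commute)
    then have mm: "{i1, p} \<in># {#{i1, q}, {i2, p}#}"
      by (metis add_mset_commute union_single_eq_member)
    then have "{i1, p} = {i1, q} \<or> {i1, p} = {i2, p}" by simp
    then show False using ne assms(6) by (auto simp: doubleton_eq_iff)
  qed
  ultimately show ?thesis unfolding sym_trop_singular_def using m by blast
qed

lemma transfer:
  fixes \<phi> :: "nat \<Rightarrow> nat"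
  assumes fin: "finite I" "finite J" and inj: "inj_on \<phi> I" "inj_on \<phi> J"
    and BA: "\<And>i j. i \<in> I \<Longrightarrow> j \<in> J \<Longrightarrow> B i j = A (\<phi> i) (\<phi> j)"
    and sing: "sym_trop_singular A (\<phi> ` I) (\<phi> ` J)"
  shows "sym_trop_singular B I J"
proof -
  let ?I = "\<phi> ` I" and ?J = "\<phi> ` J"
  define pJ where "pJ = inv_into J \<phi>"
  define pI where "pI = inv_into I \<phi>"
  have bI: "bij_betw \<phi> I ?I" and bJ: "bij_betw \<phi> J ?J" using inj by (auto simp: bij_betw_def)
  have bpJ: "bij_betw pJ ?J J" unfolding pJ_def using bJ bij_betw_inv_into by blast
  have bpI: "bij_betw pI ?I I" unfolding pI_def using bI bij_betw_inv_into by blast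
  have pJ: "\<And>y. y \<in> ?J \<Longrightarrow> \<phi> (pJ y) = y" unfolding pJ_def by (simp add: f_inv_into_f)
  have pI: "\<And>i. i \<in> I \<Longrightarrow> pI (\<phi> i) = i" unfolding pI_def using inj by (simp add: inv_into_f_f)
  have val: "trop_value B I \<tau> = trop_value A ?I (\<phi> \<circ> \<tau> \<circ> pI)" if bt: "bij_betw \<tau> I J" for \<tau>
  proof -
    have "trop_value A ?I (\<phi> \<circ> \<tau> \<circ> pI) = (\<Sum>i\<in>I. A (\<phi> i) (\<phi> (\<tau> (pI (\<phi> i)))))"
      unfolding trop_value_def by (simp add: sum.reindex inj(1))
    also have "\<dots> = trop_value B I \<tau>" unfolding trop_value_def
    proof (rule sum.cong)
      fix x assume x: "x \<in> I"
      then have "\<tau> x \<in> J" using bt bij_betwE by blast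
      then show "A (\<phi> x) (\<phi> (\<tau> (pI (\<phi> x)))) = B x (\<tau> x)" using x by (simp add: pI BA)
    qed simp
    finally show ?thesis by simp
  qed
  have bt: "bij_betw (\<phi> \<circ> \<tau> \<circ> pI) ?I ?J" if "bij_betw \<tau> I J" for \<tau>
    using bij_betw_trans[OF bij_betw_trans[OF bpI that] bJ] by (simp add: comp_assoc)
  have key: "trop_minimizer B I J (pJ \<circ> \<sigma> \<circ> \<phi>) \<and>
      image_mset (image \<phi>) (sym_monomial I (pJ \<circ> \<sigma> \<circ> \<phi>)) = sym_monomial ?I \<sigma>"
    if m: "trop_minimizer A ?I ?J \<sigma>" for \<sigma>
  proof -
    have bs: "bij_betw \<sigma> ?I ?J" using m unfolding trop_minimizer_def by simp
    have br: "bij_betw (pJ \<circ> \<sigma> \<circ> \<phi>) I J"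
      using bij_betw_trans[OF bij_betw_trans[OF bI bs] bpJ] by (simp add: comp_assoc)
    have phr: "\<phi> (pJ (\<sigma> (\<phi> i))) = \<sigma> (\<phi> i)" if "i \<in> I" for i
      by (rule pJ) (use bs that bij_betwE in blast)
    have v: "trop_value B I (pJ \<circ> \<sigma> \<circ> \<phi>) = trop_value A ?I \<sigma>"
    proof -
      have "trop_value B I (pJ \<circ> \<sigma> \<circ> \<phi>) = (\<Sum>i\<in>I. A (\<phi> i) (\<sigma> (\<phi> i)))"
        unfolding trop_value_def
      proof (rule sum.cong)
        fix x assume x: "x \<in> I"
        then have "(pJ \<circ> \<sigma> \<circ> \<phi>) x \<in> J" using br bij_betwE by blast
        then show "B x ((pJ \<circ> \<sigma> \<circ> \<phi>) x) = A (\<phi> x) (\<sigma> (\<phi> x))" using x BA phr by simp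
      qed simp
      also have "\<dots> = trop_value A ?I \<sigma>" unfolding trop_value_def by (simp add: sum.reindex inj(1))
      finally show ?thesis .
    qed
    have "trop_minimizer B I J (pJ \<circ> \<sigma> \<circ> \<phi>)"
      unfolding trop_minimizer_def
    proof (intro conjI allI impI br)
      fix \<tau> assume "bij_betw \<tau> I J"
      then show "trop_value B I (pJ \<circ> \<sigma> \<circ> \<phi>) \<le> trop_value B I \<tau>"
      proof -
        have "trop_value A ?I \<sigma> \<le> trop_value A ?I (\<phi> \<circ> \<tau> \<circ> pI)"
          using m bt[OF \<open>bij_betw \<tau> I J\<close>] unfolding trop_minimizer_def by blast
        then show ?thesis using v val[OF \<open>bij_betw \<tau> I J\<close>] by linarith
      qed
    qed
    moreover have "image_mset (image \<phi>) (sym_monomial I (pJ \<circ> \<sigma> \<circ> \<phi>)) = sym_monomial ?I \<sigma>"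
    proof -
      have "image_mset (image \<phi>) (sym_monomial I (pJ \<circ> \<sigma> \<circ> \<phi>)) = image_mset (\<lambda>i. {\<phi> i, \<sigma> (\<phi> i)}) (mset_set I)"
        unfolding sym_monomial_def image_mset.compositionality
        by (rule image_mset_cong) (use fin in \<open>simp add: phr\<close>)
      also have "\<dots> = sym_monomial ?I \<sigma>"
        unfolding sym_monomial_def image_mset_mset_set[OF inj(1), symmetric] image_mset.compositionality
        by (simp add: comp_def)
      finally show ?thesis .
    qed
    ultimately show ?thesis by simp
  qed
  from sing obtain \<sigma>1 \<sigma>2 where s: "trop_minimizer A ?I ?J \<sigma>1" "trop_minimizer A ?I ?J \<sigma>2"
    "sym_monomial ?I \<sigma>1 \<noteq> sym_monomial ?I \<sigma>2" unfolding sym_trop_singular_def by blast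
  show ?thesis unfolding sym_trop_singular_def
  proof (intro exI conjI)
    show "trop_minimizer B I J (pJ \<circ> \<sigma>1 \<circ> \<phi>)" using key[OF s(1)] by simp
    show "trop_minimizer B I J (pJ \<circ> \<sigma>2 \<circ> \<phi>)" using key[OF s(2)] by simp
    show "sym_monomial I (pJ \<circ> \<sigma>1 \<circ> \<phi>) \<noteq> sym_monomial I (pJ \<circ> \<sigma>2 \<circ> \<phi>)"
    proof
      assume "sym_monomial I (pJ \<circ> \<sigma>1 \<circ> \<phi>) = sym_monomial I (pJ \<circ> \<sigma>2 \<circ> \<phi>)"
      then have "image_mset (image \<phi>) (sym_monomial I (pJ \<circ> \<sigma>1 \<circ> \<phi>)) = image_mset (image \<phi>) (sym_monomial I (pJ \<circ> \<sigma>2 \<circ> \<phi>))" by simp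
      then show False using key[OF s(1)] key[OF s(2)] s(3) by simp
    qed
  qed
qed

theorem lemma6:
  fixes n r :: nat and A :: "nat \<Rightarrow> nat \<Rightarrow> real"
  assumes "n \<ge> 1"
    and "symmetric_mat n A"
    and "sym_trop_rank n A = r"
  shows "symmetric_mat (n + 1) (dup_last n A) \<and> sym_trop_rank (n + 1) (dup_last n A) = r"
proof
  let ?B = "dup_last n A"
  define \<phi> where "\<phi> = (\<lambda>i::nat. if i = n then n - 1 else i)"
  have BA: "?B i j = A (\<phi> i) (\<phi> j)" for i j unfolding dup_last_def \<phi>_def by simp
  have \<phi>lt: "\<phi> i < n" if "i < n + 1" for i using that assms(1) unfolding \<phi>_def by auto
  show "symmetric_mat (n + 1) ?B" unfolding symmetric_mat_def
  proof (intro allI impI)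
    fix i j assume "i < n + 1" "j < n + 1"
    then show "?B i j = ?B j i" using assms(2) \<phi>lt unfolding BA symmetric_mat_def by blast
  qed
  define SA where "SA = {r. \<exists>I J. I \<subseteq> {..<n} \<and> J \<subseteq> {..<n} \<and> card I = r \<and> card J = r \<and>
       \<not> sym_trop_singular A I J}"
  define SB where "SB = {r. \<exists>I J. I \<subseteq> {..<n+1} \<and> J \<subseteq> {..<n+1} \<and> card I = r \<and> card J = r \<and>
       \<not> sym_trop_singular ?B I J}"
  have "SA \<subseteq> SB"
  proof
    fix k assume "k \<in> SA"
    then obtain I J where IJ: "I \<subseteq> {..<n}" "J \<subseteq> {..<n}" "card I = k" "card J = k"
      "\<not> sym_trop_singular A I J" unfolding SA_def by blast
    have fin: "finite I" "finite J" using IJ finite_subset by blast+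
    have "\<not> sym_trop_singular ?B I J"
    proof
      assume "sym_trop_singular ?B I J"
      then have s: "sym_trop_singular ?B (id ` I) (id ` J)" by simp
      have "A i j = ?B (id i) (id j)" if "i \<in> I" "j \<in> J" for i j
        using that IJ unfolding BA \<phi>_def by auto
      then have "sym_trop_singular A I J"
        using transfer[where \<phi>=id and B=A and A="?B" and I=I and J=J] fin s by auto
      then show False using IJ by blast
    qed
    moreover have "I \<subseteq> {..<n+1}" "J \<subseteq> {..<n+1}" using IJ by auto
    ultimately show "k \<in> SB" unfolding SB_def using IJ by blast
  qed
  moreover have "SB \<subseteq> SA"
  proof
    fix k assume "k \<in> SB"
    then obtain I J where IJ: "I \<subseteq> {..<n+1}" "J \<subseteq> {..<n+1}" "card I = k" "card J = k"
      and ns: "\<not> sym_trop_singular ?B I J" unfolding SB_def by blast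
    have fin: "finite I" "finite J" using IJ finite_subset by blast+
    have nn: "n - 1 \<noteq> n" using assms(1) by simp
    have rows: "?B (n - 1) j = ?B n j" for j unfolding BA by (simp add: \<phi>_def)
    have cols: "?B i (n - 1) = ?B i n" for i unfolding BA by (simp add: \<phi>_def)
    have nI: "\<not> (n - 1 \<in> I \<and> n \<in> I)" using row_sing[where B="?B" and p="n-1" and q=n, OF fin _ _ _ nn rows] IJ ns by auto
    have nJ: "\<not> (n - 1 \<in> J \<and> n \<in> J)" using col_sing[where B="?B" and p="n-1" and q=n, OF fin _ _ _ nn cols] IJ ns by auto
    have injI: "inj_on \<phi> I" using nI unfolding inj_on_def \<phi>_def by auto
    have injJ: "inj_on \<phi> J" using nJ unfolding inj_on_def \<phi>_def by auto
    have "\<not> sym_trop_singular A (\<phi> ` I) (\<phi> ` J)"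
      using transfer[OF fin injI injJ, of ?B A] ns BA by blast
    moreover have "\<phi> ` I \<subseteq> {..<n}" "\<phi> ` J \<subseteq> {..<n}" using IJ \<phi>lt by auto
    moreover have "card (\<phi> ` I) = k" "card (\<phi> ` J) = k" using IJ card_image[OF injI] card_image[OF injJ] by auto
    ultimately show "k \<in> SA" unfolding SA_def by blast
  qed
  ultimately have "SA = SB" by blast
  then show "sym_trop_rank (n + 1) ?B = r"
    using assms(3) unfolding sym_trop_rank_def SA_def SB_def by simp
qed

end
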